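(* Let $K\subseteq\mathbb{R}^N$ be a closed convex set such that $B(0,r_K)\subset K\subset B(0,R_K)$ for some $r_K,R_K>0$, let $\Phi:\mathbb{R}\to\mathbb{R}$ be an increasing function, and set $\Psi(x):=\Phi(d_K^2(x))$ for $x\in\mathbb{R}^N$. Then: (a) If $\Phi$ is of class $C^1$, then for every $x\in\mathbb{R}^N$, $$\nabla\Psi(x)=2\Phi'(d_K^2(x))(x-\Pi_K(x)),$$ $$\nabla\Psi(x)\cdot x\ge 2\Phi'(d_K^2(x))\,d_K^2(x)\qquad\text{and}\qquad \nabla\Psi(x)\cdot x\ge 2\Phi'(d_K^2(x))\,r_K\,d_K(x).$$ (b) If $\partial K$ is of class $C^2$ and $\Phi$ is of class $C^2$, then for every $x\in\mathbb{R}^N\setminus K$ and $v\in\mathbb{R}^N$, $$D^2\Psi(x)v\cdot v=4\Phi''(d_K^2(x))[(x-\Pi_K(x))\cdot v]^2+2\Phi'(d_K^2(x))(v-D\Pi_K(x)v)\cdot v.$$ If in addition the second fundamental form of $\partial K$ is positive definite at every point of $\partial K$, then there exists $C_K>0$ such that for every $x\in\mathbb{R}^N\setminus K$ and $v\in\mathbb{R}^N$, $$D^2\Psi(x)v\cdot v\ge 4\Phi''(d_K^2(x))[(x-\Pi_K(x))\cdot v]^2+2\Phi'(d_K^2(x))\frac{C_Kd_K(x)}{1+C_Kd_K(x)}|v|^2.$$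
   Context: $d_K$ denotes the Euclidean distance function to $K$ and $\Pi_K:\mathbb{R}^N\to K$ the Euclidean projection onto $K$; $B(0,r)$ is the open ball of radius $r$ centered at $0$. *)

theory Defs
  imports "HOL-Analysis.Analysis"
begin

definition grad :: "('a::euclidean_space \<Rightarrow> real) \<Rightarrow> 'a \<Rightarrow> 'a" where
  "grad f x = (SOME g. (f has_derivative (\<lambda>h. g \<bullet> h)) (at x))"

definition C2_real :: "(real \<Rightarrow> real) \<Rightarrow> bool" where
  "C2_real f \<longleftrightarrow> (\<forall>t. f differentiable (at t)) \<and> (deriv f) C1_differentiable_on UNIV"

text \<open>A local C^2 defining function g of K near p, on the open set U: K \<inter> U = {g \<le> 0},
  G is the gradient of g and H y is the derivative of G at y (the Hessian), continuous in y,
  and the gradient never vanishes on U.\<close>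
definition local_C2_defining ::
  "'a::euclidean_space set \<Rightarrow> 'a \<Rightarrow> 'a set \<Rightarrow> ('a \<Rightarrow> real) \<Rightarrow> ('a \<Rightarrow> 'a) \<Rightarrow> ('a \<Rightarrow> 'a \<Rightarrow> 'a) \<Rightarrow> bool"
  where
  "local_C2_defining K p U g G H \<longleftrightarrow>
     open U \<and> p \<in> U \<and>
     (\<forall>y\<in>U. (g has_derivative (\<lambda>h. G y \<bullet> h)) (at y)) \<and>
     (\<forall>y\<in>U. (G has_derivative H y) (at y)) \<and>
     (\<forall>v. continuous_on U (\<lambda>y. H y v)) \<and>
     (\<forall>y\<in>U. G y \<noteq> 0) \<and>
     K \<inter> U = {y\<in>U. g y \<le> 0}"

definition C2_boundary :: "'a::euclidean_space set \<Rightarrow> bool" where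
  "C2_boundary K \<longleftrightarrow> (\<forall>p\<in>frontier K. \<exists>U g G H. local_C2_defining K p U g G H)"

text \<open>The second fundamental form of the boundary is positive definite at every boundary point:
  the Hessian of a local defining function is positive definite on the tangent space
  (the orthogonal complement of the gradient).\<close>
definition pos_def_second_fundamental_form :: "'a::euclidean_space set \<Rightarrow> bool" where
  "pos_def_second_fundamental_form K \<longleftrightarrow>
     (\<forall>p\<in>frontier K. \<exists>U g G H. local_C2_defining K p U g G H \<and>
        (\<forall>v. v \<noteq> 0 \<and> G p \<bullet> v = 0 \<longrightarrow> H p v \<bullet> v > 0))"

end

theory Submission
  imports Defs
begin


lemma infdist_cp:
  fixes K :: "'a::euclidean_space set"
  assumes "closed K" "K \<noteq> {}"
  shows "infdist x K = norm (x - closest_point K x)"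
proof (rule antisym)
  show "infdist x K \<le> norm (x - closest_point K x)"
    using infdist_le[OF closest_point_in_set[OF assms]] by (simp add: dist_norm)
  show "norm (x - closest_point K x) \<le> infdist x K"
    unfolding infdist_notempty[OF assms(2)]
    by (rule cINF_greatest[OF assms(2)]) (metis closest_point_le[OF assms(1)] dist_norm)
qed

lemma has_derivative_quad_bound:
  fixes f :: "'a::real_normed_vector \<Rightarrow> real"
  assumes "bounded_linear L" and C: "C > 0"
    and b: "\<And>y. \<bar>f y - f x - L (y - x)\<bar> \<le> C * (norm (y - x))\<^sup>2"
  shows "(f has_derivative L) (at x)"
  unfolding has_derivative_at_alt
proof (intro conjI allI impI assms(1))
  fix e :: real assume e: "e > 0"
  show "\<exists>d>0. \<forall>y. norm (y - x) < d \<longrightarrow> norm (f y - f x - L (y - x)) \<le> e * norm (y - x)"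
  proof (intro exI[of _ "e / C"] conjI allI impI)
    show "e / C > 0" using e C by simp
    fix y assume "norm (y - x) < e / C"
    then have ce: "C * norm (y - x) \<le> e" using C by (simp add: field_simps)
    have "C * (norm (y - x))\<^sup>2 \<le> e * norm (y - x)"
      using mult_right_mono[OF ce norm_ge_zero[of "y - x"]] by (simp add: power2_eq_square mult.assoc)
    then show "norm (f y - f x - L (y - x)) \<le> e * norm (y - x)"
      using b[of y] by simp
  qed
qed

lemma sqdist_deriv:
  fixes K :: "'a::euclidean_space set"
  assumes "closed K" "convex K" "K \<noteq> {}"
  shows "((\<lambda>y. (infdist y K)\<^sup>2) has_derivative (\<lambda>h. 2 * ((x - closest_point K x) \<bullet> h))) (at x)"
proof (rule has_derivative_quad_bound[where C=1])
  show "bounded_linear (\<lambda>h. 2 * ((x - closest_point K x) \<bullet> h))"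
    by (intro bounded_linear_intros)
  fix y
  define p where "p = closest_point K x"
  define q where "q = closest_point K y"
  define h where "h = y - x"
  have dx: "(infdist x K)\<^sup>2 = (norm (x - p))\<^sup>2" and dy: "(infdist y K)\<^sup>2 = (norm (y - q))\<^sup>2"
    using infdist_cp[OF assms(1,3)] p_def q_def by auto
  have pK: "p \<in> K" and qK: "q \<in> K" using closest_point_in_set[OF assms(1,3)] p_def q_def by auto
  have u: "(infdist y K)\<^sup>2 \<le> (norm (y - p))\<^sup>2"
    using power_mono[OF infdist_le[OF pK, of y] infdist_nonneg] by (simp add: dist_norm)
  have l: "(infdist x K)\<^sup>2 \<le> (norm (x - q))\<^sup>2"
    using power_mono[OF infdist_le[OF qK, of x] infdist_nonneg] by (simp add: dist_norm)
  have lip: "norm (q - p) \<le> norm h"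
    using closest_point_lipschitz[OF assms(2,1,3), of y x] by (simp add: p_def q_def h_def dist_norm)
  have cs: "\<bar>(q - p) \<bullet> h\<bar> \<le> (norm h)\<^sup>2"
    using Cauchy_Schwarz_ineq2[of "q - p" h] lip
    by (metis mult_right_mono norm_ge_zero order.trans power2_eq_square)
  have e1: "(norm (y - p))\<^sup>2 = (norm (x - p))\<^sup>2 + 2 * ((x - p) \<bullet> h) + (norm h)\<^sup>2"
    unfolding h_def power2_norm_eq_inner by (simp add: algebra_simps inner_commute)
  have e2: "(norm (x - q))\<^sup>2 = (norm (y - q))\<^sup>2 - 2 * ((y - q) \<bullet> h) + (norm h)\<^sup>2"
    unfolding h_def power2_norm_eq_inner by (simp add: algebra_simps inner_commute)
  have e3: "(y - q) \<bullet> h = (x - p) \<bullet> h + (norm h)\<^sup>2 - (q - p) \<bullet> h"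
    unfolding h_def power2_norm_eq_inner by (simp add: algebra_simps inner_commute)
  show "\<bar>(infdist y K)\<^sup>2 - (infdist x K)\<^sup>2 - 2 * ((x - closest_point K x) \<bullet> (y - x))\<bar> \<le> 1 * (norm (y - x))\<^sup>2"
    using u l e1 e2 e3 cs dx dy unfolding p_def[symmetric] h_def[symmetric] by (auto simp: abs_le_iff)
qed simp

lemma grad_eqI:
  fixes f :: "'a::euclidean_space \<Rightarrow> real"
  assumes "(f has_derivative (\<lambda>h. g \<bullet> h)) (at x)"
  shows "grad f x = g"
  unfolding grad_def
proof (rule some_equality)
  show "(f has_derivative (\<lambda>h. g \<bullet> h)) (at x)" by fact
  fix g' assume "(f has_derivative (\<lambda>h. g' \<bullet> h)) (at x)"
  then have "(\<lambda>h. g' \<bullet> h) = (\<lambda>h. g \<bullet> h)" using has_derivative_unique assms by blast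
  then have "g' \<bullet> (g' - g) = g \<bullet> (g' - g)" by metis
  then have "(g' - g) \<bullet> (g' - g) = 0" by (simp add: inner_diff_left)
  then show "g' = g" by simp
qed

lemma psi_deriv:
  fixes K :: "'a::euclidean_space set"
  assumes "closed K" "convex K" "K \<noteq> {}"
    and dPhi: "\<And>t. (Phi has_real_derivative deriv Phi t) (at t)"
    and Psi_def: "\<And>x. Psi x = Phi ((infdist x K)\<^sup>2)"
  shows "(Psi has_derivative
          (\<lambda>h. (2 * deriv Phi ((infdist x K)\<^sup>2)) *\<^sub>R (x - closest_point K x) \<bullet> h)) (at x)"
proof -
  have Psi: "Psi = (\<lambda>x. Phi ((infdist x K)\<^sup>2))" using Psi_def by auto
  have "((\<lambda>x. Phi ((infdist x K)\<^sup>2)) has_derivative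
        (\<lambda>h. deriv Phi ((infdist x K)\<^sup>2) * (2 * ((x - closest_point K x) \<bullet> h)))) (at x)"
    using has_derivative_compose[OF sqdist_deriv[OF assms(1-3), of x]
        has_field_derivative_imp_has_derivative[OF dPhi]] by (simp add: o_def)
  then show ?thesis unfolding Psi
    by (rule has_derivative_eq_rhs) (auto simp: fun_eq_iff)
qed

lemma psi_grad:
  fixes K :: "'a::euclidean_space set"
  assumes "closed K" "convex K" "K \<noteq> {}"
    and dPhi: "\<And>t. (Phi has_real_derivative deriv Phi t) (at t)"
    and Psi_def: "\<And>x. Psi x = Phi ((infdist x K)\<^sup>2)"
  shows "grad Psi x = (2 * deriv Phi ((infdist x K)\<^sup>2)) *\<^sub>R (x - closest_point K x)"
  by (rule grad_eqI, rule psi_deriv[OF assms])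

lemma cp_ineqs:
  fixes K :: "'a::euclidean_space set"
  assumes "closed K" "convex K" "rK > 0" "ball 0 rK \<subseteq> K"
  shows "(x - closest_point K x) \<bullet> x \<ge> (infdist x K)\<^sup>2"
    and "(x - closest_point K x) \<bullet> x \<ge> rK * infdist x K"
proof -
  have cb: "cball 0 rK \<subseteq> K"
    using closure_minimal[OF assms(4) assms(1)] closure_ball[OF assms(3), of 0] by metis
  have ne: "K \<noteq> {}" using cb assms(3) by (metis centre_in_cball empty_iff less_eq_real_def subset_eq)
  define p where "p = closest_point K x"
  have d: "infdist x K = norm (x - p)" using infdist_cp[OF assms(1) ne] p_def by simp
  have z: "0 \<in> K" using cb assms(3) by (metis centre_in_cball less_eq_real_def subset_eq)
  have 0: "(x - p) \<bullet> (0 - p) \<le> 0"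
    using closest_point_dot[OF assms(2,1) z, of x] p_def by auto
  have e: "(x - p) \<bullet> x = (norm (x - p))\<^sup>2 + (x - p) \<bullet> p"
    by (simp add: power2_norm_eq_inner algebra_simps)
  show "(x - closest_point K x) \<bullet> x \<ge> (infdist x K)\<^sup>2"
    using 0 e d p_def by simp
  have "rK * norm (x - p) \<le> (x - p) \<bullet> p"
  proof (cases "x = p")
    case True then show ?thesis by simp
  next
    case False
    define u where "u = (rK / norm (x - p)) *\<^sub>R (x - p)"
    have "norm u = rK" using False assms(3) by (simp add: u_def)
    then have "u \<in> K" using cb by auto
    then have "(x - p) \<bullet> (u - p) \<le> 0" using closest_point_dot[OF assms(2,1)] p_def by blast
    moreover have "(x - p) \<bullet> u = rK * norm (x - p)"
      using False by (simp add: u_def power2_norm_eq_inner[symmetric] power2_eq_square)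
    ultimately show ?thesis by (simp add: inner_diff_right)
  qed
  then show "(x - closest_point K x) \<bullet> x \<ge> rK * infdist x K"
    using e d p_def by (smt (verit) zero_le_power2)
qed



lemma chartD:
  assumes "local_C2_defining K p U g G H"
  shows "open U" "p \<in> U" "\<And>y. y \<in> U \<Longrightarrow> (g has_derivative (\<lambda>h. G y \<bullet> h)) (at y)"
    "\<And>y. y \<in> U \<Longrightarrow> (G has_derivative H y) (at y)"
    "\<And>v. continuous_on U (\<lambda>y. H y v)" "\<And>y. y \<in> U \<Longrightarrow> G y \<noteq> 0"
    "K \<inter> U = {y\<in>U. g y \<le> 0}"
  using assms unfolding local_C2_defining_def by auto

lemma chart_move:
  assumes "local_C2_defining K p U g G H" "q \<in> U"
  shows "local_C2_defining K q U g G H"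
  using assms unfolding local_C2_defining_def by auto

lemma cp_frontier:
  fixes K :: "'a::euclidean_space set"
  assumes "closed K" "K \<noteq> {}" "x \<notin> K"
  shows "closest_point K x \<in> frontier K"
proof -
  define p where "p = closest_point K x"
  have pK: "p \<in> K" using closest_point_in_set[OF assms(1,2)] p_def by simp
  have "p \<notin> interior K"
  proof
    assume "p \<in> interior K"
    then obtain e where e: "e > 0" "ball p e \<subseteq> K" using mem_interior by blast
    define d where "d = norm (x - p)"
    have d: "d > 0" using pK assms(3) d_def by auto
    define s where "s = min (e/2) (d/2)"
    have s: "s > 0" "s < e" "s < d" using e d by (auto simp: s_def)
    define z where "z = p + (s / d) *\<^sub>R (x - p)"
    have "dist p z = s" using s d by (simp add: z_def dist_norm d_def)
    then have "z \<in> K" using e s by auto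
    have "x - z = (1 - s / d) *\<^sub>R (x - p)" by (simp add: z_def algebra_simps)
    then have "dist x z = (1 - s/d) * d" using s d by (simp add: dist_norm d_def)
    also have "\<dots> = d - s" using d by (simp add: field_simps)
    finally have "dist x z < dist x p" using s by (simp add: dist_norm d_def)
    then show False using closest_point_le[OF assms(1) \<open>z \<in> K\<close>, of x] p_def by simp
  qed
  then show ?thesis using pK assms(1) p_def by (simp add: frontier_def)
qed

lemma line_deriv:
  assumes "(g has_derivative (\<lambda>h. G \<bullet> h)) (at (q + t *\<^sub>R h))"
  shows "((\<lambda>t. g (q + t *\<^sub>R h)) has_real_derivative (G \<bullet> h)) (at t)"
proof -
  have "((\<lambda>t. q + t *\<^sub>R h) has_derivative (\<lambda>s. s *\<^sub>R h)) (at t)"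
    by (auto intro!: derivative_eq_intros)
  from has_derivative_compose[OF this assms] show ?thesis
    unfolding has_field_derivative_def by (rule has_derivative_eq_rhs) (auto simp: fun_eq_iff o_def)
qed

lemma chart_g0_frontier:
  fixes K :: "'a::euclidean_space set"
  assumes ch: "local_C2_defining K p U g G H" and "closed K" and q: "q \<in> frontier K" "q \<in> U"
  shows "g q = 0" "q \<in> K"
proof -
  note c = chartD[OF ch]
  show qK: "q \<in> K" using q assms(2) frontier_subset_closed by blast
  then have le: "g q \<le> 0" using c(7) q by auto
  have "\<not> g q < 0"
  proof
    assume lt: "g q < 0"
    have "continuous (at q) g" using c(3)[OF q(2)] has_derivative_continuous by blast
    then have "\<forall>\<^sub>F y in at q. g y < 0" using lt
      by (metis continuous_at order_tendstoD(2))
    moreover have "\<forall>\<^sub>F y in at q. y \<in> U" using c(1) q(2) eventually_at_topological by blast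
    ultimately have "\<forall>\<^sub>F y in at q. g y < 0 \<and> y \<in> U" by (rule eventually_conj)
    then have "\<forall>\<^sub>F y in at q. y \<in> K"
    proof (rule eventually_mono)
      fix y assume "g y < 0 \<and> y \<in> U"
      then have "y \<in> {y\<in>U. g y \<le> 0}" by simp
      then show "y \<in> K" using c(7) by blast
    qed
    then obtain S where S: "open S" "q \<in> S" "\<forall>y\<in>S. y \<noteq> q \<longrightarrow> y \<in> K"
      unfolding eventually_at_topological by blast
    then have "S \<subseteq> K" using qK by auto
    then have "q \<in> interior K" using S interior_maximal by (meson interiorI)
    then show False using q(1) by (simp add: frontier_def)
  qed
  then show "g q = 0" using le by simp
qed

lemma line_into_K:
  fixes K :: "'a::euclidean_space set"
  assumes ch: "local_C2_defining K p U g G H" and q: "q \<in> U" "g q \<le> 0" and neg: "G q \<bullet> h < 0"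
  shows "\<exists>\<delta>>0. \<forall>t. 0 < t \<and> t < \<delta> \<longrightarrow> q + t *\<^sub>R h \<in> K"
proof -
  note c = chartD[OF ch]
  have "((\<lambda>t. g (q + t *\<^sub>R h)) has_real_derivative (G q \<bullet> h)) (at 0)"
    using line_deriv[of g "G q" q 0 h] c(3)[OF q(1)] by simp
  from DERIV_neg_dec_right[OF this neg] obtain d where d: "d > 0"
    "\<And>t. t > 0 \<Longrightarrow> t < d \<Longrightarrow> g (q + t *\<^sub>R h) < g q" by auto
  obtain e where e: "e > 0" "ball q e \<subseteq> U" using c(1) q(1) open_contains_ball by blast
  define \<delta> where "\<delta> = min d (e / (norm h + 1))"
  have nh: "norm h + 1 > 0" using norm_ge_zero[of h] by linarith
  have "\<delta> > 0" using d e nh by (simp add: \<delta>_def)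
  moreover have "q + t *\<^sub>R h \<in> K" if t: "0 < t" "t < \<delta>" for t
  proof -
    have "t * norm h < e"
    proof -
      have "t * norm h \<le> t * (norm h + 1)" using t by simp
      also have "\<dots> < e / (norm h + 1) * (norm h + 1)"
        using t nh by (intro mult_strict_right_mono) (auto simp: \<delta>_def)
      also have "\<dots> = e" using nh by simp
      finally show ?thesis .
    qed
    then have "q + t *\<^sub>R h \<in> U" using e t by (auto simp: dist_norm)
    moreover have "g (q + t *\<^sub>R h) \<le> 0" using d(2)[of t] t q(2) by (simp add: \<delta>_def)
    ultimately show ?thesis using c(7) by auto
  qed
  ultimately show ?thesis by blast
qed

lemma supporting:
  fixes K :: "'a::euclidean_space set"
  assumes ch: "local_C2_defining K p U g G H" and "convex K"
    and q: "q \<in> K" "q \<in> U" "g q = 0" and y: "y \<in> K"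
  shows "G q \<bullet> (y - q) \<le> 0"
proof (rule ccontr)
  note c = chartD[OF ch]
  assume "\<not> ?thesis"
  then have pos: "G q \<bullet> (y - q) > 0" by simp
  have "((\<lambda>t. g (q + t *\<^sub>R (y - q))) has_real_derivative (G q \<bullet> (y - q))) (at 0)"
    using line_deriv[of g "G q" q 0 "y - q"] c(3)[OF q(2)] by simp
  from DERIV_pos_inc_right[OF this pos] obtain d where d: "d > 0"
    "\<And>t. t > 0 \<Longrightarrow> t < d \<Longrightarrow> g q < g (q + t *\<^sub>R (y - q))" by auto
  obtain e where e: "e > 0" "ball q e \<subseteq> U" using c(1) q(2) open_contains_ball by blast
  define t where "t = min (min d 1) (e / (norm (y - q) + 1)) / 2"
  have nh: "norm (y - q) + 1 > 0" using norm_ge_zero[of "y - q"] by linarith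
  have t: "t > 0" "t < d" "t \<le> 1" using d e nh by (auto simp: t_def)
  have te: "t < e / (norm (y - q) + 1)"
  proof -
    have "min (min d 1) (e / (norm (y - q) + 1)) \<le> e / (norm (y - q) + 1)" by simp
    moreover have "e / (norm (y - q) + 1) > 0" using e nh by simp
    moreover have "\<And>a b::real. a \<le> b \<Longrightarrow> 0 < b \<Longrightarrow> a / 2 < b" by linarith
    ultimately show ?thesis unfolding t_def by blast
  qed
  have "t * norm (y - q) < e"
  proof -
    have "t * norm (y - q) \<le> t * (norm (y - q) + 1)" using t by simp
    also have "\<dots> < e / (norm (y - q) + 1) * (norm (y - q) + 1)"
      using te nh by (intro mult_strict_right_mono) auto
    also have "\<dots> = e" using nh by simp
    finally show ?thesis .
  qed
  then have inU: "q + t *\<^sub>R (y - q) \<in> U" using e t by (auto simp: dist_norm)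
  have "q + t *\<^sub>R (y - q) = (1 - t) *\<^sub>R q + t *\<^sub>R y" by (simp add: algebra_simps)
  then have "q + t *\<^sub>R (y - q) \<in> K" using convexD_alt[OF assms(2) q(1) y, of t] t by simp
  then have "g (q + t *\<^sub>R (y - q)) \<le> 0" using c(7) inU by auto
  then show False using d(2)[OF t(1,2)] q(3) by simp
qed

lemma normal_cone:
  fixes K :: "'a::euclidean_space set"
  assumes ch: "local_C2_defining K p U g G H" and "closed K" "convex K" "K \<noteq> {}"
    and q: "closest_point K y \<in> U" "g (closest_point K y) = 0"
  shows "y - closest_point K y
     = (norm (y - closest_point K y) / norm (G (closest_point K y))) *\<^sub>R G (closest_point K y)"
proof -
  note c = chartD[OF ch]
  define q where "q = closest_point K y"
  define w where "w = y - q"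
  define N where "N = G q"
  have N0: "N \<noteq> 0" using c(6) q N_def q_def by auto
  have qK: "q \<in> K" using closest_point_in_set[OF assms(2,4)] q_def by simp
  have key: "w \<bullet> h \<le> 0" if h: "N \<bullet> h < 0" for h
  proof -
    obtain \<delta> where \<delta>: "\<delta> > 0" "\<And>t. 0 < t \<and> t < \<delta> \<Longrightarrow> q + t *\<^sub>R h \<in> K"
      using line_into_K[OF ch, of q h] q h by (auto simp: q_def N_def)
    have "q + (\<delta>/2) *\<^sub>R h \<in> K" using \<delta> by auto
    from closest_point_dot[OF assms(3,2) this, of y]
    have "w \<bullet> ((\<delta>/2) *\<^sub>R h) \<le> 0" by (simp add: w_def q_def)
    then show ?thesis using \<delta> by (simp add: zero_le_mult_iff mult_le_0_iff)
  qed
  define cc where "cc = (w \<bullet> N) / (N \<bullet> N)"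
  define k where "k = w - cc *\<^sub>R N"
  have NN: "N \<bullet> N > 0" using N0 by simp
  have Nk: "N \<bullet> k = 0" using NN by (simp add: k_def cc_def inner_diff_right inner_commute)
  have wk: "w \<bullet> k = k \<bullet> k" using Nk by (simp add: k_def inner_diff_left inner_commute)
  have k0: "k = 0"
  proof (rule ccontr)
    assume "k \<noteq> 0"
    then have kk: "k \<bullet> k > 0" by simp
    define s where "s = (w \<bullet> N + 1) / (k \<bullet> k)"
    have "N \<bullet> (s *\<^sub>R k - N) < 0" using Nk NN by (simp add: inner_diff_right)
    then have "w \<bullet> (s *\<^sub>R k - N) \<le> 0" by (rule key)
    moreover have "w \<bullet> (s *\<^sub>R k - N) = 1"
      using kk wk by (simp add: s_def inner_diff_right inner_commute)
    ultimately show False by simp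
  qed
  have "w \<bullet> (- N) \<le> 0" using key[of "-N"] NN by simp
  then have cc0: "cc \<ge> 0" using NN by (simp add: cc_def)
  have w: "w = cc *\<^sub>R N" using k0 by (simp add: k_def)
  then have "norm w = cc * norm N" using cc0 by simp
  then have "cc = norm w / norm N" using N0 by (simp add: field_simps)
  then show ?thesis using w by (simp add: w_def q_def N_def)
qed



lemma chart_H_linear:
  assumes "local_C2_defining K p U g G H" "y \<in> U"
  shows "bounded_linear (H y)" "linear (H y)"
  using chartD(4)[OF assms] has_derivative_bounded_linear bounded_linear.linear by blast+

lemma psd:
  fixes K :: "'a::euclidean_space set"
  assumes ch: "local_C2_defining K p U g G H" and "convex K"
    and q: "q \<in> K" "q \<in> U" "g q = 0" and h: "G q \<bullet> h = 0"
  shows "H q h \<bullet> h \<ge> 0"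
proof (rule ccontr)
  note c = chartD[OF ch]
  assume "\<not> ?thesis"
  then have a: "H q h \<bullet> h < 0" by simp
  define N where "N = G q"
  have NN: "N \<bullet> N > 0" using c(6)[OF q(2)] by (simp add: N_def)
  define cc where "cc = - (H q h \<bullet> h) / (4 * (N \<bullet> N))"
  have cc: "cc > 0" using a NN unfolding cc_def by (intro divide_pos_pos) auto
  define \<gamma> where "\<gamma> t = q + t *\<^sub>R h + (cc * t\<^sup>2) *\<^sub>R N" for t :: real
  define \<gamma>' where "\<gamma>' t = h + (2 * cc * t) *\<^sub>R N" for t :: real
  have d\<gamma>: "(\<gamma> has_derivative (\<lambda>s. s *\<^sub>R \<gamma>' t)) (at t)" for t
    unfolding \<gamma>_def \<gamma>'_def
    by (rule derivative_eq_intros refl | simp)+ (simp add: algebra_simps)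
  have \<gamma>0: "\<gamma> 0 = q" "\<gamma>' 0 = h" by (simp_all add: \<gamma>_def \<gamma>'_def)
  have "isCont \<gamma> 0" using d\<gamma>[of 0] has_derivative_continuous by blast
  then have "\<forall>\<^sub>F t in at 0. \<gamma> t \<in> U"
    using c(1) q(2) \<gamma>0 by (metis continuous_at topological_tendstoD)
  then obtain \<delta> where \<delta>: "\<delta> > 0" "\<And>t. t \<noteq> 0 \<Longrightarrow> dist t 0 < \<delta> \<Longrightarrow> \<gamma> t \<in> U"
    unfolding eventually_at by blast
  have inU: "\<gamma> t \<in> U" if "\<bar>t\<bar> < \<delta>" for t
    using \<delta>(2)[of t] that q(2) \<gamma>0 by (cases "t = 0") auto
  define \<psi> where "\<psi> t = G (\<gamma> t) \<bullet> \<gamma>' t" for t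
  have d\<phi>: "((\<lambda>t. g (\<gamma> t)) has_real_derivative \<psi> t) (at t)" if "\<bar>t\<bar> < \<delta>" for t
  proof -
    have "((\<lambda>t. g (\<gamma> t)) has_derivative (\<lambda>s. G (\<gamma> t) \<bullet> (s *\<^sub>R \<gamma>' t))) (at t)"
      using has_derivative_compose[OF d\<gamma>[of t] c(3)[OF inU[OF that]]] by (simp add: o_def)
    then show ?thesis unfolding has_field_derivative_def \<psi>_def
      by (rule has_derivative_eq_rhs) (auto simp: fun_eq_iff)
  qed
  have lin: "linear (H q)" using chart_H_linear[OF ch q(2)] by simp
  have dG: "((\<lambda>t. G (\<gamma> t)) has_derivative (\<lambda>s. s *\<^sub>R H q h)) (at 0)"
  proof -
    have G0: "(G has_derivative H q) (at (\<gamma> 0))" using c(4)[OF q(2)] \<gamma>0 by simp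
    have "((\<lambda>t. G (\<gamma> t)) has_derivative (\<lambda>s. H q (s *\<^sub>R h))) (at 0)"
      using has_derivative_compose[OF d\<gamma>[of 0] G0] \<gamma>0 by (simp add: o_def)
    then show ?thesis by (rule has_derivative_eq_rhs) (auto simp: fun_eq_iff linear_scale[OF lin])
  qed
  have dg': "(\<gamma>' has_derivative (\<lambda>s. s *\<^sub>R ((2 * cc) *\<^sub>R N))) (at t)" for t
    unfolding \<gamma>'_def by (rule derivative_eq_intros refl | simp)+ (simp add: fun_eq_iff algebra_simps)
  have "(\<psi> has_derivative (\<lambda>s. G (\<gamma> 0) \<bullet> (s *\<^sub>R ((2 * cc) *\<^sub>R N)) + (s *\<^sub>R H q h) \<bullet> \<gamma>' 0)) (at 0)"
    unfolding \<psi>_def by (rule has_derivative_inner[OF dG dg'])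
  then have "(\<psi> has_real_derivative (2 * cc * (N \<bullet> N) + H q h \<bullet> h)) (at 0)"
    unfolding has_field_derivative_def
    by (rule has_derivative_eq_rhs) (auto simp: fun_eq_iff \<gamma>0 N_def algebra_simps)
  moreover have "2 * cc * (N \<bullet> N) + H q h \<bullet> h < 0"
    using NN a by (simp add: cc_def field_simps)
  ultimately obtain d where d: "d > 0" "\<And>s. s > 0 \<Longrightarrow> s < d \<Longrightarrow> \<psi> (0 + s) < \<psi> 0"
    using DERIV_neg_dec_right by blast
  have \<psi>0: "\<psi> 0 = 0" using h \<gamma>0 by (simp add: \<psi>_def)
  define t0 where "t0 = min d \<delta> / 2"
  have t0: "t0 > 0" "t0 < d" "t0 < \<delta>" using d \<delta> by (auto simp: t0_def)
  have "g (\<gamma> t0) \<le> g (\<gamma> 0)"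
  proof (rule DERIV_nonpos_imp_decreasing_open[of 0 t0 "\<lambda>t. g (\<gamma> t)"])
    show "0 \<le> t0" using t0 by simp
    fix s assume s: "0 < s" "s < t0"
    show "\<exists>y. ((\<lambda>t. g (\<gamma> t)) has_real_derivative y) (at s) \<and> y \<le> 0"
      using d\<phi>[of s] d(2)[of s] s t0 \<psi>0 by (intro exI[of _ "\<psi> s"]) auto
  next
    show "continuous_on {0..t0} (\<lambda>t. g (\<gamma> t))"
    proof (intro continuous_at_imp_continuous_on ballI)
      fix s assume "s \<in> {0..t0}"
      then have "\<bar>s\<bar> < \<delta>" using t0 by auto
      then show "isCont (\<lambda>t. g (\<gamma> t)) s"
        using d\<phi> DERIV_isCont by blast
    qed
  qed
  then have "g (\<gamma> t0) \<le> 0" using \<gamma>0 q(3) by simp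
  moreover have "\<gamma> t0 \<in> U" using inU t0 by simp
  ultimately have "\<gamma> t0 \<in> K" using c(7) by auto
  from supporting[OF ch assms(2) q this]
  have "N \<bullet> (\<gamma> t0 - q) \<le> 0" by (simp add: N_def)
  moreover have "N \<bullet> (\<gamma> t0 - q) = cc * t0\<^sup>2 * (N \<bullet> N)"
    using h by (simp add: \<gamma>_def N_def inner_add_right)
  moreover have "cc * t0\<^sup>2 * (N \<bullet> N) > 0" using cc t0 NN by simp
  ultimately show False by simp
qed

lemma continuous_on_Blinfun:
  fixes L :: "'a::topological_space \<Rightarrow> 'b::euclidean_space \<Rightarrow> 'c::euclidean_space"
  assumes "\<And>z. z \<in> S \<Longrightarrow> bounded_linear (L z)"
    and "\<And>v. continuous_on S (\<lambda>z. L z v)"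
  shows "continuous_on S (\<lambda>z. Blinfun (L z))"
proof -
  have "continuous_on S (\<lambda>z. blinfun_of_matrix (\<lambda>i j. L z j \<bullet> i))"
    by (intro continuous_on_blinfun_of_matrix continuous_intros assms(2))
  then show ?thesis
    by (rule continuous_on_cong[THEN iffD1, rotated 2]) (auto simp: Blinfun_eq_matrix assms(1))
qed

lemma isCont_open_nhd:
  assumes "isCont f x" "open T" "f x \<in> T"
  shows "\<exists>S. open S \<and> x \<in> S \<and> (\<forall>y\<in>S. f y \<in> T)"
  using assms continuous_at_open by blast

lemma linear_left_inverse_blinfun:
  fixes L :: "'a::euclidean_space \<Rightarrow> 'a"
  assumes "linear L" "inj L"
  shows "\<exists>invf. invf o\<^sub>L Blinfun L = id_blinfun"
proof -
  obtain g where g: "linear g" "g \<circ> L = id" using linear_injective_left_inverse[OF assms] by blast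
  have bg: "bounded_linear g" using g(1) linear_conv_bounded_linear by blast
  have bL: "bounded_linear L" using assms(1) linear_conv_bounded_linear by blast
  have "Blinfun g o\<^sub>L Blinfun L = id_blinfun"
    by (rule blinfun_eqI) (simp add: bounded_linear_Blinfun_apply bg bL pointfree_idE[OF g(2)])
  then show ?thesis by blast
qed



lemma loc:
  fixes K :: "'a::euclidean_space set"
  assumes K: "closed K" "convex K" "K \<noteq> {}" and x: "x \<notin> K"
    and ch: "local_C2_defining K (closest_point K x) U g G H"
  shows "\<exists>P'. (closest_point K has_derivative P') (at x) \<and>
     (\<forall>v. G (closest_point K x) \<bullet> P' v = 0 \<and>
        (\<exists>\<mu>. v = P' v + (norm (x - closest_point K x) / norm (G (closest_point K x))) *\<^sub>R
                H (closest_point K x) (P' v) + \<mu> *\<^sub>R G (closest_point K x)))"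
proof -
  note c = chartD[OF ch]
  define P where "P = closest_point K"
  define p where "p = P x"
  have pU: "p \<in> U" using c(2) p_def P_def by simp
  have pF: "p \<in> frontier K" using cp_frontier[OF K(1,3) x] p_def P_def by simp
  have gp: "g p = 0" and pK: "p \<in> K" using chart_g0_frontier[OF ch K(1) pF pU] by simp_all
  have Gp: "G p \<noteq> 0" using c(6) pU by simp
  define l0 where "l0 = norm (x - p) / norm (G p)"
  have "x - p = l0 *\<^sub>R G p"
    using normal_cone[OF ch K(1,2,3), of x] pU gp by (simp add: p_def P_def l0_def)
  then have xp: "x = p + l0 *\<^sub>R G p" by (simp add: algebra_simps)
  have "x \<noteq> p" using pK x by auto
  then have l0pos: "l0 > 0" using Gp by (simp add: l0_def)
  define F where "F z = (fst z + snd z *\<^sub>R G (fst z), g (fst z))" for z :: "'a \<times> real"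
  define F' where "F' z w = (fst w + snd z *\<^sub>R H (fst z) (fst w) + snd w *\<^sub>R G (fst z),
      G (fst z) \<bullet> fst w)" for z w :: "'a \<times> real"
  define S where "S = U \<times> (UNIV :: real set)"
  have Sopen: "open S" using c(1) by (simp add: S_def open_Times)
  have dF: "(F has_derivative F' z) (at z)" if "z \<in> S" for z
  proof -
    obtain q s where z: "z = (q, s)" by (cases z)
    have q: "q \<in> U" using that z S_def by auto
    have a: "((\<lambda>z. fst z) has_derivative (\<lambda>w. fst w)) (at z)"
      by (rule has_derivative_fst[OF has_derivative_ident])
    have b: "((\<lambda>z. snd z) has_derivative (\<lambda>w. snd w)) (at z)"
      by (rule has_derivative_snd[OF has_derivative_ident])
    have G1: "(G has_derivative H q) (at (fst z))" using c(4)[OF q] z by simp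
    have g1: "(g has_derivative (\<lambda>h. G q \<bullet> h)) (at (fst z))" using c(3)[OF q] z by simp
    have d1: "((\<lambda>z. G (fst z)) has_derivative (\<lambda>w. H q (fst w))) (at z)"
      using has_derivative_compose[OF a G1] by simp
    have e: "((\<lambda>z. snd z *\<^sub>R G (fst z)) has_derivative
        (\<lambda>w. snd z *\<^sub>R H q (fst w) + snd w *\<^sub>R G (fst z))) (at z)"
      using has_derivative_scaleR[OF b d1] by simp
    have f: "((\<lambda>z. g (fst z)) has_derivative (\<lambda>w. G q \<bullet> fst w)) (at z)"
      using has_derivative_compose[OF a g1] by simp
    have "(F has_derivative (\<lambda>w. (fst w + (snd z *\<^sub>R H q (fst w) + snd w *\<^sub>R G (fst z)),
        G q \<bullet> fst w))) (at z)"
      unfolding F_def by (rule has_derivative_Pair[OF has_derivative_add[OF a e] f])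
    then show ?thesis
      by (rule has_derivative_eq_rhs) (simp add: F'_def z fun_eq_iff algebra_simps)
  qed
  define FB where "FB z = Blinfun (F' z)" for z
  have blF: "bounded_linear (F' z)" if "z \<in> S" for z
    using dF[OF that] has_derivative_bounded_linear by blast
  have FBapp: "blinfun_apply (FB z) = F' z" if "z \<in> S" for z
    using blF[OF that] by (simp add: FB_def bounded_linear_Blinfun_apply)
  have contG: "continuous_on U G"
    using c(4) has_derivative_continuous continuous_at_imp_continuous_on by blast
  have fstS: "fst ` S \<subseteq> U" by (auto simp: S_def)
  have contFB: "continuous_on S FB"
    unfolding FB_def
  proof (rule continuous_on_Blinfun[OF blF])
    fix w :: "'a \<times> real"
    have h1: "continuous_on S (\<lambda>z. H (fst z) (fst w))"
      by (rule continuous_on_compose2[OF c(5) continuous_on_fst[OF continuous_on_id] fstS])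
    have h2: "continuous_on S (\<lambda>z. G (fst z))"
      by (rule continuous_on_compose2[OF contG continuous_on_fst[OF continuous_on_id] fstS])
    show "continuous_on S (\<lambda>z. F' z w)"
      unfolding F'_def by (intro continuous_intros h1 h2)
  qed
  define z0 where "z0 = (p, l0)"
  have z0S: "z0 \<in> S" using pU by (simp add: z0_def S_def)
  have linF0: "linear (F' z0)" using blF[OF z0S] bounded_linear.linear by blast
  have injF0: "inj (F' z0)"
    unfolding linear_injective_0[OF linF0]
  proof (intro allI impI)
    fix w :: "'a \<times> real"
    obtain h \<mu> where w: "w = (h, \<mu>)" by (cases w)
    assume "F' z0 w = 0"
    then have e1: "h + l0 *\<^sub>R H p h + \<mu> *\<^sub>R G p = 0" and e2: "G p \<bullet> h = 0"
      by (simp_all add: F'_def z0_def w zero_prod_def)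
    have ps: "H p h \<bullet> h \<ge> 0" using psd[OF ch K(2) pK pU gp e2] .
    have "(h + l0 *\<^sub>R H p h + \<mu> *\<^sub>R G p) \<bullet> h = 0" using e1 by simp
    then have "h \<bullet> h + l0 * (H p h \<bullet> h) = 0"
      using e2 by (simp add: inner_add_left)
    moreover have "l0 * (H p h \<bullet> h) \<ge> 0" using l0pos ps by simp
    ultimately have "h \<bullet> h = 0" using inner_ge_zero[of h] by linarith
    then have h0: "h = 0" by simp
    have "H p 0 = 0" using chart_H_linear(2)[OF ch pU] linear_0 by blast
    then have "\<mu> *\<^sub>R G p = 0" using e1 h0 by simp
    then have "\<mu> = 0" using Gp by simp
    then show "w = 0" using h0 w by (simp add: zero_prod_def)
  qed
  obtain invf where invf: "invf o\<^sub>L FB z0 = id_blinfun"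
    using linear_left_inverse_blinfun[OF linF0 injF0] by (auto simp: FB_def)
  have derF: "\<And>z. z \<in> S \<Longrightarrow> (F has_derivative blinfun_apply (FB z)) (at z)"
    using dF FBapp by simp
  obtain U' V ginv g' where U': "open U'" "U' \<subseteq> S" "z0 \<in> U'" and V: "open V" "F z0 \<in> V"
    and hom: "homeomorphism U' V F ginv"
    and dginv: "\<And>y. y \<in> V \<Longrightarrow> (ginv has_derivative (g' y)) (at y)"
    and g'eq: "\<And>y. y \<in> V \<Longrightarrow> g' y = inv (blinfun_apply (FB (ginv y)))"
    and bij: "\<And>y. y \<in> V \<Longrightarrow> bij (blinfun_apply (FB (ginv y)))"
    using inverse_function_theorem[OF Sopen derF contFB z0S invf] by blast
  have Fz0: "F z0 = (x, 0)" using xp gp by (simp add: F_def z0_def)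
  define \<zeta> where "\<zeta> y = (P y, norm (y - P y) / norm (G (P y)))" for y
  have \<zeta>x: "\<zeta> x = z0" by (simp add: \<zeta>_def z0_def l0_def p_def)
  have cP: "isCont P x" using continuous_at_closest_point[OF K(2,1,3)] by (simp add: P_def)
  have cG: "isCont G (P x)" using c(4)[OF pU] has_derivative_continuous p_def by blast
  have cGP: "isCont (\<lambda>y. G (P y)) x" using continuous_at_compose[OF cP cG] by (simp add: o_def)
  have "isCont \<zeta> x" unfolding \<zeta>_def
    using cP cGP Gp p_def by (intro continuous_intros) auto
  then obtain W1 where W1: "open W1" "x \<in> W1" "\<forall>y\<in>W1. \<zeta> y \<in> U'"
    using isCont_open_nhd[OF _ U'(1)] \<zeta>x U'(3) by metis
  obtain W3 where W3: "open W3" "x \<in> W3" "\<forall>y\<in>W3. P y \<in> U"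
    using isCont_open_nhd[OF cP c(1)] pU p_def by metis
  have x0V: "(x, 0) \<in> V" using Fz0 V(2) by simp
  have "isCont (\<lambda>y. (y, 0::real)) x" by (intro continuous_intros)
  from isCont_open_nhd[OF this V(1)] x0V
  obtain W4 where W4: "open W4" "x \<in> W4" "\<forall>y\<in>W4. (y, 0::real) \<in> V"
    by auto
  define W where "W = W1 \<inter> W3 \<inter> W4 \<inter> (- K)"
  have Wopen: "open W" using W1 W3 W4 K(1) by (auto simp: W_def)
  have xW: "x \<in> W" using W1 W3 W4 x by (simp add: W_def)
  have ginv_eq: "ginv (y, 0) = \<zeta> y" if y: "y \<in> W" for y
  proof -
    have yK: "y \<notin> K" and PyU: "P y \<in> U" and zU: "\<zeta> y \<in> U'" using y W1 W3 by (auto simp: W_def)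
    have "P y \<in> frontier K" using cp_frontier[OF K(1,3) yK] by (simp add: P_def)
    then have g0: "g (P y) = 0" using chart_g0_frontier[OF ch K(1) _ PyU] by simp
    have "y - P y = (norm (y - P y) / norm (G (P y))) *\<^sub>R G (P y)"
      using normal_cone[OF ch K(1,2,3), of y] PyU g0 by (simp add: P_def)
    then have "F (\<zeta> y) = (y, 0)" using g0 by (simp add: F_def \<zeta>_def algebra_simps)
    then show ?thesis using homeomorphism_apply1[OF hom zU] by simp
  qed
  have ginvx: "ginv (x, 0) = z0" using ginv_eq[OF xW] \<zeta>x by simp
  define P' where "P' v = fst (g' (x, 0) (v, 0))" for v
  have "((\<lambda>y. (y, 0::real)) has_derivative (\<lambda>v. (v, 0))) (at x)"
    by (intro derivative_eq_intros) auto
  from has_derivative_compose[OF this dginv[OF x0V]]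
  have "((\<lambda>y. ginv (y, 0)) has_derivative (\<lambda>v. g' (x, 0) (v, 0))) (at x)" by simp
  note dd = this
  have P'eq: "P' = (\<lambda>v. fst (g' (x, 0) (v, 0)))" by (rule ext) (simp add: P'_def)
  from has_derivative_fst[OF dd]
  have "((\<lambda>y. fst (ginv (y, 0))) has_derivative P') (at x)" unfolding P'eq .
  then have dP: "(P has_derivative P') (at x)"
    by (rule has_derivative_transform_within_open[OF _ Wopen xW]) (simp add: ginv_eq \<zeta>_def)
  have inv_ok: "F' z0 (g' (x, 0) u) = u" for u
  proof -
    have "bij (blinfun_apply (FB z0))" using bij[OF x0V] ginvx by simp
    then have "F' z0 (inv (F' z0) u) = u" using FBapp[OF z0S] by (simp add: bij_is_surj surj_f_inv_f)
    then show ?thesis using g'eq[OF x0V] ginvx FBapp[OF z0S] by simp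
  qed
  have "G p \<bullet> P' v = 0 \<and> v = P' v + l0 *\<^sub>R H p (P' v) + snd (g' (x, 0) (v, 0)) *\<^sub>R G p" for v
    using inv_ok[of "(v, 0)"] by (simp add: F'_def z0_def P'_def)
  then show ?thesis using dP unfolding P_def p_def l0_def by blast
qed



lemma C2_realD:
  assumes "C2_real Phi"
  shows "\<And>t. (Phi has_real_derivative deriv Phi t) (at t)"
    "\<And>t. (deriv Phi has_real_derivative deriv (deriv Phi) t) (at t)"
proof -
  fix t
  show "(Phi has_real_derivative deriv Phi t) (at t)"
    using assms unfolding C2_real_def using DERIV_deriv_iff_real_differentiable by blast
  have "deriv Phi differentiable (at t)"
    using assms unfolding C2_real_def C1_differentiable_on_eq by blast
  then show "(deriv Phi has_real_derivative deriv (deriv Phi) t) (at t)"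
    using DERIV_deriv_iff_real_differentiable by blast
qed

lemma gradpsi_deriv:
  fixes K :: "'a::euclidean_space set"
  assumes K: "closed K" "convex K" "K \<noteq> {}"
    and C2: "C2_real Phi"
    and Psi_def: "\<And>x. Psi x = Phi ((infdist x K)\<^sup>2)"
    and dP: "(closest_point K has_derivative P') (at x)"
  shows "(grad Psi has_derivative (\<lambda>h. (2 * deriv Phi ((infdist x K)\<^sup>2)) *\<^sub>R (h - P' h)
          + (2 * (deriv (deriv Phi) ((infdist x K)\<^sup>2) * (2 * ((x - closest_point K x) \<bullet> h)))) *\<^sub>R
              (x - closest_point K x))) (at x)"
proof -
  note d = C2_realD[OF C2]
  have gr: "grad Psi = (\<lambda>y. (2 * deriv Phi ((infdist y K)\<^sup>2)) *\<^sub>R (y - closest_point K y))"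
    using psi_grad[OF K d(1) Psi_def] by (simp add: fun_eq_iff)
  have a: "((\<lambda>y. deriv Phi ((infdist y K)\<^sup>2)) has_derivative
      (\<lambda>h. deriv (deriv Phi) ((infdist x K)\<^sup>2) * (2 * ((x - closest_point K x) \<bullet> h)))) (at x)"
    using has_derivative_compose[OF sqdist_deriv[OF K(1,2,3), of x]
        has_field_derivative_imp_has_derivative[OF d(2)]] by (simp add: o_def)
  have b: "((\<lambda>y. 2 * deriv Phi ((infdist y K)\<^sup>2)) has_derivative
      (\<lambda>h. 2 * (deriv (deriv Phi) ((infdist x K)\<^sup>2) * (2 * ((x - closest_point K x) \<bullet> h))))) (at x)"
    using has_derivative_mult_right[OF a, of 2] by simp
  have c: "((\<lambda>y. y - closest_point K y) has_derivative (\<lambda>h. h - P' h)) (at x)"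
    by (rule has_derivative_diff[OF has_derivative_ident dP])
  show ?thesis unfolding gr
    using has_derivative_scaleR[OF b c] by simp
qed

lemma partb:
  fixes K :: "'a::euclidean_space set"
  assumes K: "closed K" "convex K" "K \<noteq> {}"
    and C2: "C2_real Phi"
    and Psi_def: "\<And>x. Psi x = Phi ((infdist x K)\<^sup>2)"
    and dP: "(closest_point K has_derivative P') (at x)"
  shows "grad Psi differentiable (at x)" "closest_point K differentiable (at x)"
    "frechet_derivative (grad Psi) (at x) v \<bullet> v
            = 4 * deriv (deriv Phi) ((infdist x K)\<^sup>2) * ((x - closest_point K x) \<bullet> v)\<^sup>2
              + 2 * deriv Phi ((infdist x K)\<^sup>2)
                  * ((v - frechet_derivative (closest_point K) (at x) v) \<bullet> v)"
proof -
  note g = gradpsi_deriv[OF K C2 Psi_def dP]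
  show "grad Psi differentiable (at x)" using g differentiableI by blast
  show "closest_point K differentiable (at x)" using dP differentiableI by blast
  have fP: "frechet_derivative (closest_point K) (at x) = P'" using frechet_derivative_at[OF dP] by simp
  show "frechet_derivative (grad Psi) (at x) v \<bullet> v
            = 4 * deriv (deriv Phi) ((infdist x K)\<^sup>2) * ((x - closest_point K x) \<bullet> v)\<^sup>2
              + 2 * deriv Phi ((infdist x K)\<^sup>2)
                  * ((v - frechet_derivative (closest_point K) (at x) v) \<bullet> v)"
    unfolding fP frechet_derivative_at[OF g, symmetric]
    by (simp add: inner_add_left power2_eq_square algebra_simps inner_commute)
qed

lemma curv_alg:
  fixes v w :: "'a::real_inner"
  assumes t: "t \<ge> 0" and A: "v \<bullet> w \<ge> (1 + t) * (norm w)\<^sup>2"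
  shows "(v - w) \<bullet> v \<ge> t / (1 + t) * (norm v)\<^sup>2"
proof -
  define A where "A = v \<bullet> w"
  have A0: "A \<ge> 0" using A t unfolding A_def by (smt (verit) mult_nonneg_nonneg zero_le_power2)
  have cs: "A \<le> norm v * norm w" unfolding A_def using Cauchy_Schwarz_ineq2[of v w] by simp
  have t1: "1 + t > 0" using t by simp
  have "A \<le> (norm v)\<^sup>2 / (1 + t)"
  proof (cases "A = 0")
    case True then show ?thesis using t1 by simp
  next
    case False
    then have Ap: "A > 0" using A0 by simp
    have "A * A \<le> (norm v * norm w) * (norm v * norm w)"
      using cs A0 by (intro mult_mono) auto
    also have "\<dots> = (norm v)\<^sup>2 * (norm w)\<^sup>2" by (simp add: power2_eq_square)
    also have "\<dots> \<le> (norm v)\<^sup>2 * (A / (1 + t))"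
      using A t1 unfolding A_def[symmetric] by (intro mult_left_mono) (auto simp: field_simps)
    finally have "A * A \<le> (norm v)\<^sup>2 * A / (1 + t)" by simp
    then have "A * (A * (1 + t)) \<le> A * (norm v)\<^sup>2" using t1 by (simp add: field_simps)
    then have "A * (1 + t) \<le> (norm v)\<^sup>2" using Ap mult_le_cancel_left_pos by blast
    then show ?thesis using t1 by (simp add: pos_le_divide_eq)
  qed
  then have "(norm v)\<^sup>2 - A \<ge> (norm v)\<^sup>2 - (norm v)\<^sup>2 / (1 + t)" by simp
  moreover have "(norm v)\<^sup>2 - (norm v)\<^sup>2 / (1 + t) = t / (1 + t) * (norm v)\<^sup>2"
    using t1 by (simp add: field_simps)
  moreover have "(v - w) \<bullet> v = (norm v)\<^sup>2 - A"
    by (simp add: A_def inner_diff_left power2_norm_eq_inner inner_commute[of w v])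
  ultimately show ?thesis by simp
qed

lemma partc_core:
  fixes K :: "'a::euclidean_space set"
  assumes K: "closed K" "convex K" "K \<noteq> {}" and x: "x \<notin> K"
    and ch: "local_C2_defining K (closest_point K x) U g G H"
    and cpos: "c > 0"
    and bnd: "\<And>w. G (closest_point K x) \<bullet> w = 0 \<Longrightarrow>
        H (closest_point K x) w \<bullet> w \<ge> c * norm (G (closest_point K x)) * (norm w)\<^sup>2"
  shows "\<exists>P'. (closest_point K has_derivative P') (at x) \<and>
     (\<forall>v. (v - P' v) \<bullet> v \<ge> c * infdist x K / (1 + c * infdist x K) * (norm v)\<^sup>2)"
proof -
  define p where "p = closest_point K x"
  obtain P' where dP: "(closest_point K has_derivative P') (at x)"
    and rel: "\<And>v. G p \<bullet> P' v = 0 \<and>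
        (\<exists>\<mu>. v = P' v + (norm (x - p) / norm (G p)) *\<^sub>R H p (P' v) + \<mu> *\<^sub>R G p)"
    using loc[OF K x ch] unfolding p_def by blast
  have Gp: "G p \<noteq> 0" using chartD(6)[OF ch chartD(2)[OF ch]] p_def by simp
  have d: "infdist x K = norm (x - p)" using infdist_cp[OF K(1,3)] p_def by simp
  have "(v - P' v) \<bullet> v \<ge> c * infdist x K / (1 + c * infdist x K) * (norm v)\<^sup>2" for v
  proof -
    define w where "w = P' v"
    obtain \<mu> where v: "v = w + (norm (x - p) / norm (G p)) *\<^sub>R H p w + \<mu> *\<^sub>R G p"
      and Gw: "G p \<bullet> w = 0" using rel[of v] w_def by blast
    have Hw: "H p w \<bullet> w \<ge> c * norm (G p) * (norm w)\<^sup>2" using bnd Gw p_def by simp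
    have "v \<bullet> w = w \<bullet> w + (norm (x - p) / norm (G p)) * (H p w \<bullet> w)"
      using Gw by (subst v) (simp add: inner_add_left)
    also have "(norm (x - p) / norm (G p)) * (H p w \<bullet> w) \<ge>
        (norm (x - p) / norm (G p)) * (c * norm (G p) * (norm w)\<^sup>2)"
      using Hw by (intro mult_left_mono) auto
    then have "w \<bullet> w + (norm (x - p) / norm (G p)) * (H p w \<bullet> w) \<ge>
        (1 + c * norm (x - p)) * (norm w)\<^sup>2"
      using Gp by (simp add: power2_norm_eq_inner algebra_simps)
    finally have "v \<bullet> w \<ge> (1 + c * infdist x K) * (norm w)\<^sup>2" using d by simp
    from curv_alg[OF _ this] show ?thesis
      using cpos infdist_nonneg[of x K] by (simp add: w_def)
  qed
  then show ?thesis using dP by blast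
qed



lemma local_unif:
  fixes K :: "'a::euclidean_space set"
  assumes ch: "local_C2_defining K q U g G H"
    and pd: "\<forall>w. w \<noteq> 0 \<and> G q \<bullet> w = 0 \<longrightarrow> H q w \<bullet> w > 0"
  shows "\<exists>e>0. \<exists>c>0. \<forall>q'\<in>ball q e. q' \<in> U \<and>
            (\<forall>w. G q' \<bullet> w = 0 \<longrightarrow> H q' w \<bullet> w \<ge> c * norm (G q') * (norm w)\<^sup>2)"
proof (rule ccontr)
  note cc = chartD[OF ch]
  obtain e0 where e0: "e0 > 0" "ball q e0 \<subseteq> U" using cc(1) cc(2) open_contains_ball by blast
  assume neg: "\<not> ?thesis"
  have "\<forall>n::nat. \<exists>q' u. q' \<in> ball q (e0 / Suc n) \<and> G q' \<bullet> u = 0 \<and> norm u = 1 \<and>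
           H q' u \<bullet> u < norm (G q') / Suc n"
  proof
    fix n :: nat
    have en: "e0 / Suc n > 0" "1 / Suc n > (0::real)" using e0 by auto
    have "e0 / Suc n \<le> e0" using e0 by (simp add: divide_le_eq)
    then have sub: "ball q (e0 / Suc n) \<subseteq> U" using e0 by auto
    from neg en have "\<not> (\<forall>q'\<in>ball q (e0 / Suc n). q' \<in> U \<and>
            (\<forall>w. G q' \<bullet> w = 0 \<longrightarrow> H q' w \<bullet> w \<ge> (1 / Suc n) * norm (G q') * (norm w)\<^sup>2))"
      by blast
    then obtain q' where q': "q' \<in> ball q (e0 / Suc n)" and
      nq: "\<not> (q' \<in> U \<and> (\<forall>w. G q' \<bullet> w = 0 \<longrightarrow> H q' w \<bullet> w \<ge> (1 / Suc n) * norm (G q') * (norm w)\<^sup>2))"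
      by blast
    have q'U: "q' \<in> U" using q' sub by auto
    then obtain w where Gw: "G q' \<bullet> w = 0" and lt: "H q' w \<bullet> w < (1 / Suc n) * norm (G q') * (norm w)\<^sup>2"
      using nq by force
    have lin: "linear (H q')" using chart_H_linear[OF ch q'U] by simp
    have w0: "w \<noteq> 0"
    proof
      assume "w = 0"
      then show False using lt linear_0[OF lin] by simp
    qed
    define u where "u = (1 / norm w) *\<^sub>R w"
    have nu: "norm u = 1" using w0 by (simp add: u_def)
    have Gu: "G q' \<bullet> u = 0" using Gw by (simp add: u_def)
    have "H q' u \<bullet> u = (H q' w \<bullet> w) / (norm w)\<^sup>2"
      by (simp add: u_def linear_scale[OF lin] power2_eq_square)
    also have "\<dots> < ((1 / Suc n) * norm (G q') * (norm w)\<^sup>2) / (norm w)\<^sup>2"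
      using lt w0 by (intro divide_strict_right_mono) auto
    also have "\<dots> = norm (G q') / Suc n" using w0 by simp
    finally show "\<exists>q' u. q' \<in> ball q (e0 / Suc n) \<and> G q' \<bullet> u = 0 \<and> norm u = 1 \<and>
           H q' u \<bullet> u < norm (G q') / Suc n" using q' Gu nu by blast
  qed
  then obtain qs us where S: "\<And>n. qs n \<in> ball q (e0 / Suc n)" "\<And>n. G (qs n) \<bullet> us n = 0"
    "\<And>n. norm (us n) = 1" "\<And>n. H (qs n) (us n) \<bullet> us n < norm (G (qs n)) / Suc n"
    by metis
  have qsU: "qs n \<in> U" for n
  proof -
    have "e0 / Suc n \<le> e0" using e0 by (simp add: divide_le_eq)
    then show ?thesis using S(1)[of n] e0 by auto
  qed
  have "seq_compact (sphere (0::'a) 1)" by (rule compact_imp_seq_compact) simp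
  moreover have "\<forall>n. us n \<in> sphere 0 1" using S(3) by simp
  ultimately obtain l r where l: "l \<in> sphere 0 1" and r: "strict_mono r" and ul: "(us \<circ> r) \<longlonglongrightarrow> l"
    by (rule seq_compactE)
  have ul': "(\<lambda>n. us (r n)) \<longlonglongrightarrow> l" using ul by (simp add: o_def)
  have inv0: "(\<lambda>n. 1 / real (Suc n)) \<longlonglongrightarrow> 0"
    using LIMSEQ_Suc[OF lim_const_over_n[of "1::real"]] by simp
  have "(\<lambda>n. qs n - q) \<longlonglongrightarrow> 0"
  proof (rule Lim_null_comparison)
    show "\<forall>\<^sub>F n in sequentially. norm (qs n - q) \<le> e0 * (1 / real (Suc n))"
      using S(1) by (auto simp: dist_norm norm_minus_commute less_imp_le)
    show "(\<lambda>n. e0 * (1 / real (Suc n))) \<longlonglongrightarrow> 0" using tendsto_mult_right_zero[OF inv0] by simp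
  qed
  then have qsq: "qs \<longlonglongrightarrow> q" by (simp add: LIM_zero_iff)
  have qr: "(\<lambda>n. qs (r n)) \<longlonglongrightarrow> q" using LIMSEQ_subseq_LIMSEQ[OF qsq r] by (simp add: o_def)
  have cG: "isCont G q" using cc(4)[OF cc(2)] has_derivative_continuous by blast
  have Gr: "(\<lambda>n. G (qs (r n))) \<longlonglongrightarrow> G q" using isCont_tendsto_compose[OF cG qr] .
  have "(\<lambda>n. G (qs (r n)) \<bullet> us (r n)) \<longlonglongrightarrow> G q \<bullet> l" using tendsto_inner[OF Gr ul'] .
  moreover have "(\<lambda>n. G (qs (r n)) \<bullet> us (r n)) = (\<lambda>n. 0)" using S(2) by simp
  ultimately have Gl: "G q \<bullet> l = 0" using LIMSEQ_unique tendsto_const by metis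
  have contHB: "continuous_on U (\<lambda>y. Blinfun (H y))"
    using continuous_on_Blinfun[OF chart_H_linear(1)[OF ch] cc(5)] by blast
  have "(\<lambda>n. Blinfun (H (qs (r n)))) \<longlonglongrightarrow> Blinfun (H q)"
    using continuous_on_tendsto_compose[OF contHB qr cc(2)] qsU by simp
  from blinfun.tendsto[OF this ul']
  have "(\<lambda>n. H (qs (r n)) (us (r n))) \<longlonglongrightarrow> H q l"
    using chart_H_linear(1)[OF ch] qsU cc(2) by (simp add: bounded_linear_Blinfun_apply)
  from tendsto_inner[OF this ul']
  have lim1: "(\<lambda>n. H (qs (r n)) (us (r n)) \<bullet> us (r n)) \<longlonglongrightarrow> H q l \<bullet> l" .
  have "(\<lambda>n. 1 / real (Suc (r n))) \<longlonglongrightarrow> 0"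
    using LIMSEQ_subseq_LIMSEQ[OF inv0 r] by (simp add: o_def)
  from tendsto_mult[OF tendsto_norm[OF Gr] this]
  have lim2: "(\<lambda>n. norm (G (qs (r n))) * (1 / real (Suc (r n)))) \<longlonglongrightarrow> 0" by simp
  have "H q l \<bullet> l \<le> 0"
    by (rule tendsto_le[OF trivial_limit_sequentially lim2 lim1])
       (use S(4) in \<open>auto intro!: always_eventually less_imp_le\<close>)
  moreover have "l \<noteq> 0" using l by auto
  ultimately show False using pd Gl by force
qed

lemma uniform_curv:
  fixes K :: "'a::euclidean_space set"
  assumes cpt: "compact (frontier K)" and pd: "pos_def_second_fundamental_form K"
  shows "\<exists>c>0. \<forall>q\<in>frontier K. \<exists>U g G H. local_C2_defining K q U g G H \<and>
            (\<forall>w. G q \<bullet> w = 0 \<longrightarrow> H q w \<bullet> w \<ge> c * norm (G q) * (norm w)\<^sup>2)"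
proof -
  have "\<forall>q\<in>frontier K. \<exists>e>0. \<exists>c>0. \<exists>U g G H. local_C2_defining K q U g G H \<and>
     (\<forall>q'\<in>ball q e. q' \<in> U \<and> (\<forall>w. G q' \<bullet> w = 0 \<longrightarrow> H q' w \<bullet> w \<ge> c * norm (G q') * (norm w)\<^sup>2))"
  proof
    fix q assume "q \<in> frontier K"
    then obtain U g G H where ch: "local_C2_defining K q U g G H"
      and p: "\<forall>v. v \<noteq> 0 \<and> G q \<bullet> v = 0 \<longrightarrow> H q v \<bullet> v > 0"
      using pd unfolding pos_def_second_fundamental_form_def by blast
    from local_unif[OF ch p] ch show "\<exists>e>0. \<exists>c>0. \<exists>U g G H. local_C2_defining K q U g G H \<and>
     (\<forall>q'\<in>ball q e. q' \<in> U \<and> (\<forall>w. G q' \<bullet> w = 0 \<longrightarrow> H q' w \<bullet> w \<ge> c * norm (G q') * (norm w)\<^sup>2))"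
      by blast
  qed
  then obtain E C where EC: "\<And>q. q \<in> frontier K \<Longrightarrow> E q > 0 \<and> C q > 0 \<and> (\<exists>U g G H. local_C2_defining K q U g G H \<and>
     (\<forall>q'\<in>ball q (E q). q' \<in> U \<and> (\<forall>w. G q' \<bullet> w = 0 \<longrightarrow> H q' w \<bullet> w \<ge> C q * norm (G q') * (norm w)\<^sup>2)))"
    by metis
  have "frontier K \<subseteq> (\<Union>q\<in>frontier K. ball q (E q))" using EC by force
  then obtain D where D: "D \<subseteq> frontier K" "finite D" "frontier K \<subseteq> (\<Union>q\<in>D. ball q (E q))"
    using compactE_image[OF cpt, of "frontier K" "\<lambda>q. ball q (E q)"] by blast
  define c where "c = (if D = {} then 1 else Min (C ` D))"
  have cpos: "c > 0" using D EC by (auto simp: c_def)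
  have cle: "c \<le> C q" if "q \<in> D" for q using that D(2) by (auto simp: c_def)
  show ?thesis
  proof (intro exI[of _ c] conjI cpos ballI)
    fix q' assume q': "q' \<in> frontier K"
    then obtain q where qD: "q \<in> D" and qb: "q' \<in> ball q (E q)" using D(3) by blast
    obtain U g G H where ch: "local_C2_defining K q U g G H" and
      b: "\<forall>q'\<in>ball q (E q). q' \<in> U \<and> (\<forall>w. G q' \<bullet> w = 0 \<longrightarrow> H q' w \<bullet> w \<ge> C q * norm (G q') * (norm w)\<^sup>2)"
      using EC[of q] qD D(1) by blast
    have q'U: "q' \<in> U" using b qb by blast
    have "\<forall>w. G q' \<bullet> w = 0 \<longrightarrow> H q' w \<bullet> w \<ge> c * norm (G q') * (norm w)\<^sup>2"
    proof (intro allI impI)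
      fix w assume "G q' \<bullet> w = 0"
      then have "H q' w \<bullet> w \<ge> C q * norm (G q') * (norm w)\<^sup>2" using b qb by blast
      moreover have "c * norm (G q') * (norm w)\<^sup>2 \<le> C q * norm (G q') * (norm w)\<^sup>2"
        using cle[OF qD] by (intro mult_right_mono) auto
      ultimately show "H q' w \<bullet> w \<ge> c * norm (G q') * (norm w)\<^sup>2" by linarith
    qed
    then show "\<exists>U g G H. local_C2_defining K q' U g G H \<and>
            (\<forall>w. G q' \<bullet> w = 0 \<longrightarrow> H q' w \<bullet> w \<ge> c * norm (G q') * (norm w)\<^sup>2)"
      using chart_move[OF ch q'U] by blast
  qed
qed



lemma mono_deriv_nonneg:
  fixes Phi :: "real \<Rightarrow> real"
  assumes "mono Phi" "(Phi has_real_derivative D) (at t)"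
  shows "D \<ge> 0"
proof (rule mono_on_imp_deriv_nonneg[of UNIV Phi D t])
  show "mono_on UNIV Phi" using assms(1) by (simp add: mono_on_def mono_def)
qed (use assms(2) in auto)

theorem corollary2p3:
  fixes K :: "'a::euclidean_space set" and Phi :: "real \<Rightarrow> real" and Psi :: "'a \<Rightarrow> real"
    and rK RK :: real
  assumes "closed K" and "convex K"
    and "rK > 0" and "RK > 0"
    and "ball 0 rK \<subseteq> K" and "K \<subseteq> ball 0 RK"
    and "mono Phi"
    and Psi_def: "\<And>x. Psi x = Phi ((infdist x K)\<^sup>2)"
  shows
    "(Phi C1_differentiable_on UNIV \<longrightarrow>
       (\<forall>x. (Psi has_derivative
               (\<lambda>h. (2 * deriv Phi ((infdist x K)\<^sup>2)) *\<^sub>R (x - closest_point K x) \<bullet> h)) (at x)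
          \<and> grad Psi x \<bullet> x \<ge> 2 * deriv Phi ((infdist x K)\<^sup>2) * (infdist x K)\<^sup>2
          \<and> grad Psi x \<bullet> x \<ge> 2 * deriv Phi ((infdist x K)\<^sup>2) * rK * infdist x K))
   \<and> (C2_boundary K \<and> C2_real Phi \<longrightarrow>
       (\<forall>x v. x \<notin> K \<longrightarrow>
          grad Psi differentiable (at x) \<and> closest_point K differentiable (at x) \<and>
          frechet_derivative (grad Psi) (at x) v \<bullet> v
            = 4 * deriv (deriv Phi) ((infdist x K)\<^sup>2) * ((x - closest_point K x) \<bullet> v)\<^sup>2
              + 2 * deriv Phi ((infdist x K)\<^sup>2)
                  * ((v - frechet_derivative (closest_point K) (at x) v) \<bullet> v)))
   \<and> (C2_boundary K \<and> C2_real Phi \<and> pos_def_second_fundamental_form K \<longrightarrow>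
       (\<exists>CK > 0. \<forall>x v. x \<notin> K \<longrightarrow>
          frechet_derivative (grad Psi) (at x) v \<bullet> v
            \<ge> 4 * deriv (deriv Phi) ((infdist x K)\<^sup>2) * ((x - closest_point K x) \<bullet> v)\<^sup>2
              + 2 * deriv Phi ((infdist x K)\<^sup>2)
                  * (CK * infdist x K / (1 + CK * infdist x K)) * (norm v)\<^sup>2))"
proof -
  have "0 \<in> K" using assms(3,5) by auto
  then have Kne: "K \<noteq> {}" by auto
  note K = assms(1) assms(2) Kne
  have partA: "Phi C1_differentiable_on UNIV \<longrightarrow>
       (\<forall>x. (Psi has_derivative
               (\<lambda>h. (2 * deriv Phi ((infdist x K)\<^sup>2)) *\<^sub>R (x - closest_point K x) \<bullet> h)) (at x)
          \<and> grad Psi x \<bullet> x \<ge> 2 * deriv Phi ((infdist x K)\<^sup>2) * (infdist x K)\<^sup>2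
          \<and> grad Psi x \<bullet> x \<ge> 2 * deriv Phi ((infdist x K)\<^sup>2) * rK * infdist x K)"
  proof (intro impI allI conjI)
    assume C1: "Phi C1_differentiable_on UNIV"
    have dPhi: "(Phi has_real_derivative deriv Phi t) (at t)" for t
      using C1 unfolding C1_differentiable_on_eq using DERIV_deriv_iff_real_differentiable by blast
    fix x
    show "(Psi has_derivative
               (\<lambda>h. (2 * deriv Phi ((infdist x K)\<^sup>2)) *\<^sub>R (x - closest_point K x) \<bullet> h)) (at x)"
      by (rule psi_deriv[OF K dPhi Psi_def])
    have gr: "grad Psi x \<bullet> x = (2 * deriv Phi ((infdist x K)\<^sup>2)) * ((x - closest_point K x) \<bullet> x)"
      using psi_grad[OF K dPhi Psi_def, of x] by simp
    have nn: "2 * deriv Phi ((infdist x K)\<^sup>2) \<ge> 0"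
      using mono_deriv_nonneg[OF assms(7) dPhi] by simp
    note ci = cp_ineqs[OF assms(1,2,3,5), of x]
    show "grad Psi x \<bullet> x \<ge> 2 * deriv Phi ((infdist x K)\<^sup>2) * (infdist x K)\<^sup>2"
      unfolding gr using mult_left_mono[OF ci(1) nn] .
    show "grad Psi x \<bullet> x \<ge> 2 * deriv Phi ((infdist x K)\<^sup>2) * rK * infdist x K"
      unfolding gr using mult_left_mono[OF ci(2) nn] by (simp add: mult.assoc)
  qed
  have partB: "C2_boundary K \<and> C2_real Phi \<longrightarrow>
       (\<forall>x v. x \<notin> K \<longrightarrow>
          grad Psi differentiable (at x) \<and> closest_point K differentiable (at x) \<and>
          frechet_derivative (grad Psi) (at x) v \<bullet> v
            = 4 * deriv (deriv Phi) ((infdist x K)\<^sup>2) * ((x - closest_point K x) \<bullet> v)\<^sup>2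
              + 2 * deriv Phi ((infdist x K)\<^sup>2)
                  * ((v - frechet_derivative (closest_point K) (at x) v) \<bullet> v))"
  proof (intro impI allI)
    fix x v
    assume h: "C2_boundary K \<and> C2_real Phi" and x: "x \<notin> K"
    have "closest_point K x \<in> frontier K" using cp_frontier[OF assms(1) Kne x] .
    then obtain U g G H where ch: "local_C2_defining K (closest_point K x) U g G H"
      using h unfolding C2_boundary_def by blast
    obtain P' where dP: "(closest_point K has_derivative P') (at x)" using loc[OF K x ch] by blast
    note pb = partb[OF K conjunct2[OF h] Psi_def dP]
    show "grad Psi differentiable (at x) \<and> closest_point K differentiable (at x) \<and>
          frechet_derivative (grad Psi) (at x) v \<bullet> v
            = 4 * deriv (deriv Phi) ((infdist x K)\<^sup>2) * ((x - closest_point K x) \<bullet> v)\<^sup>2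
              + 2 * deriv Phi ((infdist x K)\<^sup>2)
                  * ((v - frechet_derivative (closest_point K) (at x) v) \<bullet> v)"
      using pb by blast
  qed
  have partC: "C2_boundary K \<and> C2_real Phi \<and> pos_def_second_fundamental_form K \<longrightarrow>
       (\<exists>CK > 0. \<forall>x v. x \<notin> K \<longrightarrow>
          frechet_derivative (grad Psi) (at x) v \<bullet> v
            \<ge> 4 * deriv (deriv Phi) ((infdist x K)\<^sup>2) * ((x - closest_point K x) \<bullet> v)\<^sup>2
              + 2 * deriv Phi ((infdist x K)\<^sup>2)
                  * (CK * infdist x K / (1 + CK * infdist x K)) * (norm v)\<^sup>2)"
  proof (intro impI)
    assume h: "C2_boundary K \<and> C2_real Phi \<and> pos_def_second_fundamental_form K"
    have "bounded K" using assms(6) bounded_ball bounded_subset by blast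
    then have cpt: "compact (frontier K)" by (rule compact_frontier_bounded)
    obtain c where c: "c > 0" and unif: "\<forall>q\<in>frontier K. \<exists>U g G H. local_C2_defining K q U g G H \<and>
            (\<forall>w. G q \<bullet> w = 0 \<longrightarrow> H q w \<bullet> w \<ge> c * norm (G q) * (norm w)\<^sup>2)"
      using uniform_curv[OF cpt] h by blast
    have dPhi: "(Phi has_real_derivative deriv Phi t) (at t)" for t
      using C2_realD(1)[of Phi] h by blast
    show "\<exists>CK > 0. \<forall>x v. x \<notin> K \<longrightarrow>
          frechet_derivative (grad Psi) (at x) v \<bullet> v
            \<ge> 4 * deriv (deriv Phi) ((infdist x K)\<^sup>2) * ((x - closest_point K x) \<bullet> v)\<^sup>2
              + 2 * deriv Phi ((infdist x K)\<^sup>2)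
                  * (CK * infdist x K / (1 + CK * infdist x K)) * (norm v)\<^sup>2"
    proof (intro exI[of _ c] conjI c allI impI)
      fix x v assume x: "x \<notin> K"
      have "closest_point K x \<in> frontier K" using cp_frontier[OF assms(1) Kne x] .
      then obtain U g G H where ch: "local_C2_defining K (closest_point K x) U g G H"
        and bnd: "\<forall>w. G (closest_point K x) \<bullet> w = 0 \<longrightarrow>
            H (closest_point K x) w \<bullet> w \<ge> c * norm (G (closest_point K x)) * (norm w)\<^sup>2"
        using unif by blast
      obtain P' where dP: "(closest_point K has_derivative P') (at x)"
        and ineq: "\<forall>v. (v - P' v) \<bullet> v \<ge> c * infdist x K / (1 + c * infdist x K) * (norm v)\<^sup>2"
        using partc_core[OF K x ch c] bnd by blast
      note pb = partb(3)[OF K conjunct1[OF conjunct2[OF h]] Psi_def dP, of v]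
      have fP: "frechet_derivative (closest_point K) (at x) = P'" using frechet_derivative_at[OF dP] by simp
      have nn: "2 * deriv Phi ((infdist x K)\<^sup>2) \<ge> 0"
        using mono_deriv_nonneg[OF assms(7) dPhi] by simp
      have "2 * deriv Phi ((infdist x K)\<^sup>2) * (c * infdist x K / (1 + c * infdist x K) * (norm v)\<^sup>2)
          \<le> 2 * deriv Phi ((infdist x K)\<^sup>2) * ((v - P' v) \<bullet> v)"
        using mult_left_mono[OF spec[OF ineq, of v] nn] .
      then show "frechet_derivative (grad Psi) (at x) v \<bullet> v
            \<ge> 4 * deriv (deriv Phi) ((infdist x K)\<^sup>2) * ((x - closest_point K x) \<bullet> v)\<^sup>2
              + 2 * deriv Phi ((infdist x K)\<^sup>2)
                  * (c * infdist x K / (1 + c * infdist x K)) * (norm v)\<^sup>2"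
        unfolding pb fP by (simp add: mult.assoc)
    qed
  qed
  show ?thesis using partA partB partC by blast
qed


end
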